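(* Let $\mathcal{M}=(S,A,\Delta,T)$ be a \~pMDP that is isomorphic to its MEC-quotient $\mathcal{M}_{/\mathrm{MEC}}$, with graph $(V,E)$. Then for every graph-preserving valuation $\mathsf{val}$ and every $(s,a)\in S\times A$ with $(s,a)\trianglelefteq (sE\setminus\{(s,a)\})$, we have $\max_\sigma \mathbb{P}^{s}_{\mathcal{M}^\sigma_{\mathsf{val}}}[\Diamond\mathit{fin}]=\max_{\sigma'}\mathbb{P}^{s}_{\mathcal{N}^{\sigma'}_{\mathsf{val}}}[\Diamond\mathit{fin}]$, where $\mathcal{N}=(S,A,\Delta\setminus\{(s,a,s')\in\Delta\mid s'\in S\},T)$ is obtained by removing all transitions of the pair $(s,a)$.
   Context: A \~pMDP is $(S,A,\Delta,T)$ with finite states $S$, actions $A$, targets $T=\{\mathit{fin},\mathit{fail}\}$ (no outgoing transitions), and transitions $\Delta\subseteq(S\setminus T)\times A\times S$. Graph: $V=S\cup((S\setminus T)\times A)$, edge $((s,a),s')$ iff $(s,a,s')\in\Delta$, edge $(s,(s,a))$ iff $(s,a,s')\in\Delta$ for some $s'\ne\mathit{fail}$; $vE$ is the successor set. A graph-preserving valuation $\mathsf{val}$ assigns to each state-action pair a full-support probability distribution on its $\Delta$-successors. A strategy and $\mathsf{val}$ induce a Markov chain $\mathcal{M}^\sigma_{\mathsf{val}}$; $\mathbb{P}^s[\Diamond\mathit{fin}]$ is the probability of reaching $\mathit{fin}$ from $s$. Values: $\mathrm{Rew}^*_{\mathsf{val}}(s)=\max_\sigma\mathbb{P}^s[\Diamond\mathit{fin}]$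 for states, and for $(s,a)$, $\mathrm{Rew}^*_{\mathsf{val}}((s,a))=\sum_{s'}\mathsf{val}_{(s,a)}(s')\mathrm{Rew}^*_{\mathsf{val}}(s')$. For $v\in V,W\subseteq V$: $v\trianglelefteq W$ iff for every graph-preserving $\mathsf{val}$ some $w\in W$ has $\mathrm{Rew}^*_{\mathsf{val}}(v)\le\mathrm{Rew}^*_{\mathsf{val}}(w)$. A sub-MDP is a pair $(P,B)$ with $P\subseteq S$, $B$ a set of pairs $(p,a)$ with $(p,(p,a))\in E$, such that every $p\in P$ has some $(p,a)\in B$ and every $\Delta$-successor of every $(p,a)\in B$ lies in $P$. An end component is a sub-MDP whose induced subgraph on $P\cup B$ is strongly connected; a MEC is an end component $(P,B)$ such that no other end component $(P',B')$ has $B\subseteq B'$. For $s\in S$, $[s]$ denotes $P$ if $s$ lies in a (unique) MEC $(P,B)$ and $\{s\}$ otherwise. The MEC-quotient is $\mathcal{M}_{/\mathrm{MEC}}=(S',A,\Delta',T')$ with $S'=\{[s]\mid s\in S\}$, $T'=\{[t]\mid t\in T\}$ and $\Delta'=\{([s],a,[s'])\mid (s,a,s')\in\Delta,\ [s]\neq[s']\}$. *)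

theory Defs
  imports Complex_Main
begin

definition pmdp :: "'s set \<Rightarrow> 'a set \<Rightarrow> ('s \<times> 'a \<times> 's) set \<Rightarrow> 's \<Rightarrow> 's \<Rightarrow> bool" where
  "pmdp S A \<Delta> fin fail \<longleftrightarrow> finite S \<and> finite A \<and> fin \<in> S \<and> fail \<in> S \<and> fin \<noteq> fail \<and>
     \<Delta> \<subseteq> (S - {fin, fail}) \<times> A \<times> S"

definition succs :: "('s \<times> 'a \<times> 's) set \<Rightarrow> 's \<Rightarrow> 'a \<Rightarrow> 's set" where
  "succs \<Delta> s a = {s'. (s, a, s') \<in> \<Delta>}"

definition enabled :: "('s \<times> 'a \<times> 's) set \<Rightarrow> 's \<Rightarrow> 'a set" where
  "enabled \<Delta> s = {a. \<exists>s'. (s, a, s') \<in> \<Delta>}"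

datatype ('s, 'a) vertex = St 's | SA 's 'a

definition edges :: "('s \<times> 'a \<times> 's) set \<Rightarrow> 's \<Rightarrow> (('s,'a) vertex \<times> ('s,'a) vertex) set" where
  "edges \<Delta> fail =
     {(SA s a, St s') | s a s'. (s, a, s') \<in> \<Delta>} \<union>
     {(St s, SA s a) | s a s'. (s, a, s') \<in> \<Delta> \<and> s' \<noteq> fail}"

definition vsucc :: "('s \<times> 'a \<times> 's) set \<Rightarrow> 's \<Rightarrow> ('s,'a) vertex \<Rightarrow> ('s,'a) vertex set" where
  "vsucc \<Delta> fail v = {w. (v, w) \<in> edges \<Delta> fail}"

definition graph_preserving :: "('s \<times> 'a \<times> 's) set \<Rightarrow> ('s \<Rightarrow> 'a \<Rightarrow> 's \<Rightarrow> real) \<Rightarrow> bool" where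
  "graph_preserving \<Delta> val \<longleftrightarrow>
     (\<forall>s a. succs \<Delta> s a \<noteq> {} \<longrightarrow>
        (\<forall>s'. val s a s' \<ge> 0 \<and> (val s a s' > 0 \<longleftrightarrow> s' \<in> succs \<Delta> s a)) \<and>
        (\<Sum>s'\<in>succs \<Delta> s a. val s a s') = 1)"

text \<open>General (history-dependent, randomised) strategies: a history is a nonempty list of
states; the strategy gives a distribution over the actions enabled in the last state.\<close>

definition strategy :: "('s \<times> 'a \<times> 's) set \<Rightarrow> ('s list \<Rightarrow> 'a \<Rightarrow> real) \<Rightarrow> bool" where
  "strategy \<Delta> \<sigma> \<longleftrightarrow>
     (\<forall>h a. h \<noteq> [] \<longrightarrow> \<sigma> h a \<ge> 0 \<and> (\<sigma> h a \<noteq> 0 \<longrightarrow> a \<in> enabled \<Delta> (last h))) \<and>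
     (\<forall>h. h \<noteq> [] \<longrightarrow> enabled \<Delta> (last h) \<noteq> {} \<longrightarrow> (\<Sum>a\<in>enabled \<Delta> (last h). \<sigma> h a) = 1)"

fun reach_within ::
  "('s \<times> 'a \<times> 's) set \<Rightarrow> ('s \<Rightarrow> 'a \<Rightarrow> 's \<Rightarrow> real) \<Rightarrow> ('s list \<Rightarrow> 'a \<Rightarrow> real) \<Rightarrow> 's
    \<Rightarrow> 's list \<Rightarrow> nat \<Rightarrow> real" where
  "reach_within \<Delta> val \<sigma> fin h 0 = (if last h = fin then 1 else 0)"
| "reach_within \<Delta> val \<sigma> fin h (Suc n) =
     (if last h = fin then 1 else
      (\<Sum>a\<in>enabled \<Delta> (last h). \<sigma> h a *
         (\<Sum>s'\<in>succs \<Delta> (last h) a. val (last h) a s' * reach_within \<Delta> val \<sigma> fin (h @ [s']) n)))"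

text \<open>Probability of eventually reaching fin from s (limit of the increasing sequence of
step-bounded reachability probabilities).\<close>

definition reach_prob ::
  "('s \<times> 'a \<times> 's) set \<Rightarrow> ('s \<Rightarrow> 'a \<Rightarrow> 's \<Rightarrow> real) \<Rightarrow> ('s list \<Rightarrow> 'a \<Rightarrow> real) \<Rightarrow> 's \<Rightarrow> 's \<Rightarrow> real" where
  "reach_prob \<Delta> val \<sigma> fin s = (SUP n. reach_within \<Delta> val \<sigma> fin [s] n)"

definition max_rew :: "('s \<times> 'a \<times> 's) set \<Rightarrow> ('s \<Rightarrow> 'a \<Rightarrow> 's \<Rightarrow> real) \<Rightarrow> 's \<Rightarrow> 's \<Rightarrow> real" where
  "max_rew \<Delta> val fin s = (SUP \<sigma>\<in>{\<sigma>. strategy \<Delta> \<sigma>}. reach_prob \<Delta> val \<sigma> fin s)"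

fun rew_v :: "('s \<times> 'a \<times> 's) set \<Rightarrow> ('s \<Rightarrow> 'a \<Rightarrow> 's \<Rightarrow> real) \<Rightarrow> 's \<Rightarrow> ('s,'a) vertex \<Rightarrow> real" where
  "rew_v \<Delta> val fin (St s) = max_rew \<Delta> val fin s"
| "rew_v \<Delta> val fin (SA s a) = (\<Sum>s'\<in>succs \<Delta> s a. val s a s' * max_rew \<Delta> val fin s')"

definition dominated ::
  "('s \<times> 'a \<times> 's) set \<Rightarrow> 's \<Rightarrow> ('s,'a) vertex \<Rightarrow> ('s,'a) vertex set \<Rightarrow> bool" where
  "dominated \<Delta> fin v W \<longleftrightarrow>
     (\<forall>val. graph_preserving \<Delta> val \<longrightarrow> (\<exists>w\<in>W. rew_v \<Delta> val fin v \<le> rew_v \<Delta> val fin w))"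

definition sub_mdp :: "'s set \<Rightarrow> ('s \<times> 'a \<times> 's) set \<Rightarrow> 's \<Rightarrow> 's set \<Rightarrow> ('s \<times> 'a) set \<Rightarrow> bool" where
  "sub_mdp S \<Delta> fail P B \<longleftrightarrow> P \<subseteq> S \<and>
     (\<forall>(p, a)\<in>B. (St p, SA p a) \<in> edges \<Delta> fail) \<and>
     (\<forall>p\<in>P. \<exists>a. (p, a) \<in> B) \<and>
     (\<forall>(p, a)\<in>B. succs \<Delta> p a \<subseteq> P)"

definition sub_vertices :: "'s set \<Rightarrow> ('s \<times> 'a) set \<Rightarrow> ('s,'a) vertex set" where
  "sub_vertices P B = St ` P \<union> (\<lambda>(p, a). SA p a) ` B"

definition end_component :: "'s set \<Rightarrow> ('s \<times> 'a \<times> 's) set \<Rightarrow> 's \<Rightarrow> 's set \<Rightarrow> ('s \<times> 'a) set \<Rightarrow> bool" where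
  "end_component S \<Delta> fail P B \<longleftrightarrow> sub_mdp S \<Delta> fail P B \<and>
     (\<forall>u\<in>sub_vertices P B. \<forall>v\<in>sub_vertices P B.
        (u, v) \<in> (edges \<Delta> fail \<inter> (sub_vertices P B \<times> sub_vertices P B))\<^sup>*)"

definition mec :: "'s set \<Rightarrow> ('s \<times> 'a \<times> 's) set \<Rightarrow> 's \<Rightarrow> 's set \<Rightarrow> ('s \<times> 'a) set \<Rightarrow> bool" where
  "mec S \<Delta> fail P B \<longleftrightarrow> end_component S \<Delta> fail P B \<and>
     \<not> (\<exists>P' B'. end_component S \<Delta> fail P' B' \<and> (P', B') \<noteq> (P, B) \<and> B \<subseteq> B')"

definition mec_class :: "'s set \<Rightarrow> ('s \<times> 'a \<times> 's) set \<Rightarrow> 's \<Rightarrow> 's \<Rightarrow> 's set" where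
  "mec_class S \<Delta> fail s =
     (if \<exists>P B. mec S \<Delta> fail P B \<and> s \<in> P
      then (THE P. \<exists>B. mec S \<Delta> fail P B \<and> s \<in> P) else {s})"

definition quot_states :: "'s set \<Rightarrow> ('s \<times> 'a \<times> 's) set \<Rightarrow> 's \<Rightarrow> 's set set" where
  "quot_states S \<Delta> fail = mec_class S \<Delta> fail ` S"

definition quot_trans :: "'s set \<Rightarrow> ('s \<times> 'a \<times> 's) set \<Rightarrow> 's \<Rightarrow> ('s set \<times> 'a \<times> 's set) set" where
  "quot_trans S \<Delta> fail =
     {(mec_class S \<Delta> fail s, a, mec_class S \<Delta> fail s') | s a s'.
        (s, a, s') \<in> \<Delta> \<and> mec_class S \<Delta> fail s \<noteq> mec_class S \<Delta> fail s'}"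

definition iso_to_mec_quotient :: "'s set \<Rightarrow> 'a set \<Rightarrow> ('s \<times> 'a \<times> 's) set \<Rightarrow> 's \<Rightarrow> 's \<Rightarrow> bool" where
  "iso_to_mec_quotient S A \<Delta> fin fail \<longleftrightarrow>
     (\<exists>f g. bij_betw f S (quot_states S \<Delta> fail) \<and> bij_betw g A A \<and>
        f fin = mec_class S \<Delta> fail fin \<and> f fail = mec_class S \<Delta> fail fail \<and>
        (\<forall>s\<in>S. \<forall>a\<in>A. \<forall>s'\<in>S. (s, a, s') \<in> \<Delta> \<longleftrightarrow> (f s, g a, f s') \<in> quot_trans S \<Delta> fail))"

end

theory Submission
  imports Defs
begin


lemma edge_St_SA[simp]: "(St p, SA q b) \<in> edges D fail \<longleftrightarrow> p = q \<and> (\<exists>s'. (p, b, s') \<in> D \<and> s' \<noteq> fail)"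
  unfolding edges_def by auto
lemma edge_SA_St[simp]: "(SA p b, St q) \<in> edges D fail \<longleftrightarrow> (p, b, q) \<in> D"
  unfolding edges_def by auto
lemma edge_St_St[simp]: "(St p, St q) \<notin> edges D fail"
  unfolding edges_def by auto
lemma edge_SA_SA[simp]: "(SA p b, SA q c) \<notin> edges D fail"
  unfolding edges_def by auto

lemma EC_P_eq:
  assumes "end_component S D fail P B"
  shows "P = fst ` B"
proof
  show "P \<subseteq> fst ` B"
  proof
    fix p assume "p \<in> P"
    then obtain b where "(p, b) \<in> B" using assms unfolding end_component_def sub_mdp_def by blast
    then show "p \<in> fst ` B" by (metis fst_conv image_eqI)
  qed
next
  show "fst ` B \<subseteq> P"
  proof
    fix p assume "p \<in> fst ` B"
    then obtain b where pb: "(p, b) \<in> B" by force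
    have sm: "sub_mdp S D fail P B" using assms unfolding end_component_def by auto
    then have "(St p, SA p b) \<in> edges D fail" using pb unfolding sub_mdp_def by auto
    then obtain s' where s': "(p, b, s') \<in> D" by auto
    then have "s' \<in> P" using sm pb unfolding sub_mdp_def succs_def by auto
    define E' where "E' = edges D fail \<inter> (sub_vertices P B \<times> sub_vertices P B)"
    have "St s' \<in> sub_vertices P B" "SA p b \<in> sub_vertices P B"
      using \<open>s' \<in> P\<close> pb unfolding sub_vertices_def by force+
    then have "(St s', SA p b) \<in> E'\<^sup>*" using assms unfolding end_component_def E'_def by blast
    then show "p \<in> P"
    proof (cases rule: rtranclE)
      case base then show ?thesis by simp
    next
      case (step z)
      then have "(z, SA p b) \<in> edges D fail" "z \<in> sub_vertices P B" unfolding E'_def by auto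
      then show ?thesis unfolding sub_vertices_def edges_def by auto
    qed
  qed
qed

lemma rtrancl_E_mono:
  assumes "(u, v) \<in> (E \<inter> (V1 \<times> V1))\<^sup>*" "V1 \<subseteq> V"
  shows "(u, v) \<in> (E \<inter> (V \<times> V))\<^sup>*"
proof -
  have "E \<inter> (V1 \<times> V1) \<subseteq> E \<inter> (V \<times> V)" using assms(2) by auto
  then show ?thesis using assms(1) rtrancl_mono by blast
qed

lemma EC_union:
  assumes e1: "end_component S D fail P1 B1" and e2: "end_component S D fail P2 B2"
    and y: "y \<in> P1" "y \<in> P2"
  shows "end_component S D fail (P1 \<union> P2) (B1 \<union> B2)"
proof -
  have sv: "sub_vertices (P1 \<union> P2) (B1 \<union> B2) = sub_vertices P1 B1 \<union> sub_vertices P2 B2"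
    unfolding sub_vertices_def by auto
  have sm: "sub_mdp S D fail (P1 \<union> P2) (B1 \<union> B2)"
    using e1 e2 unfolding end_component_def sub_mdp_def by blast
  define V where "V = sub_vertices (P1 \<union> P2) (B1 \<union> B2)"
  have yv1: "St y \<in> sub_vertices P1 B1" and yv2: "St y \<in> sub_vertices P2 B2"
    using y unfolding sub_vertices_def by auto
  have to: "(u, St y) \<in> (edges D fail \<inter> (V \<times> V))\<^sup>*" if "u \<in> V" for u
  proof -
    from that have "u \<in> sub_vertices P1 B1 \<or> u \<in> sub_vertices P2 B2" using sv V_def by auto
    then show ?thesis
    proof
      assume "u \<in> sub_vertices P1 B1"
      then have "(u, St y) \<in> (edges D fail \<inter> (sub_vertices P1 B1 \<times> sub_vertices P1 B1))\<^sup>*"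
        using e1 yv1 unfolding end_component_def by blast
      then show ?thesis by (rule rtrancl_E_mono) (auto simp: V_def sv)
    next
      assume "u \<in> sub_vertices P2 B2"
      then have "(u, St y) \<in> (edges D fail \<inter> (sub_vertices P2 B2 \<times> sub_vertices P2 B2))\<^sup>*"
        using e2 yv2 unfolding end_component_def by blast
      then show ?thesis by (rule rtrancl_E_mono) (auto simp: V_def sv)
    qed
  qed
  have from_: "(St y, u) \<in> (edges D fail \<inter> (V \<times> V))\<^sup>*" if "u \<in> V" for u
  proof -
    from that have "u \<in> sub_vertices P1 B1 \<or> u \<in> sub_vertices P2 B2" using sv V_def by auto
    then show ?thesis
    proof
      assume "u \<in> sub_vertices P1 B1"
      then have "(St y, u) \<in> (edges D fail \<inter> (sub_vertices P1 B1 \<times> sub_vertices P1 B1))\<^sup>*"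
        using e1 yv1 unfolding end_component_def by blast
      then show ?thesis by (rule rtrancl_E_mono) (auto simp: V_def sv)
    next
      assume "u \<in> sub_vertices P2 B2"
      then have "(St y, u) \<in> (edges D fail \<inter> (sub_vertices P2 B2 \<times> sub_vertices P2 B2))\<^sup>*"
        using e2 yv2 unfolding end_component_def by blast
      then show ?thesis by (rule rtrancl_E_mono) (auto simp: V_def sv)
    qed
  qed
  show ?thesis unfolding end_component_def
  proof (intro conjI ballI)
    show "sub_mdp S D fail (P1 \<union> P2) (B1 \<union> B2)" by (rule sm)
    fix u v assume uv: "u \<in> sub_vertices (P1 \<union> P2) (B1 \<union> B2)" "v \<in> sub_vertices (P1 \<union> P2) (B1 \<union> B2)"
    show "(u, v) \<in> (edges D fail \<inter> sub_vertices (P1 \<union> P2) (B1 \<union> B2) \<times> sub_vertices (P1 \<union> P2) (B1 \<union> B2))\<^sup>*"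
      using rtrancl_trans[OF to[of u] from_[of v]] uv unfolding V_def by blast
  qed
qed

lemma MEC_unique:
  assumes m1: "mec S D fail P1 B1" and m2: "mec S D fail P2 B2" and "y \<in> P1" "y \<in> P2"
  shows "P1 = P2"
proof -
  have e1: "end_component S D fail P1 B1" using m1 unfolding mec_def by simp
  have e2: "end_component S D fail P2 B2" using m2 unfolding mec_def by simp
  have u: "end_component S D fail (P1 \<union> P2) (B1 \<union> B2)"
    by (rule EC_union[OF e1 e2 assms(3,4)])
  have n1: "\<not> (\<exists>P' B'. end_component S D fail P' B' \<and> (P', B') \<noteq> (P1, B1) \<and> B1 \<subseteq> B')"
    using m1 unfolding mec_def by simp
  have n2: "\<not> (\<exists>P' B'. end_component S D fail P' B' \<and> (P', B') \<noteq> (P2, B2) \<and> B2 \<subseteq> B')"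
    using m2 unfolding mec_def by simp
  have "(P1 \<union> P2, B1 \<union> B2) = (P1, B1)"
  proof (rule ccontr)
    assume "(P1 \<union> P2, B1 \<union> B2) \<noteq> (P1, B1)"
    with u have "\<exists>P' B'. end_component S D fail P' B' \<and> (P', B') \<noteq> (P1, B1) \<and> B1 \<subseteq> B'"
      by (intro exI[of _ "P1 \<union> P2"] exI[of _ "B1 \<union> B2"]) simp
    with n1 show False by contradiction
  qed
  moreover have "(P1 \<union> P2, B1 \<union> B2) = (P2, B2)"
  proof (rule ccontr)
    assume "(P1 \<union> P2, B1 \<union> B2) \<noteq> (P2, B2)"
    with u have "\<exists>P' B'. end_component S D fail P' B' \<and> (P', B') \<noteq> (P2, B2) \<and> B2 \<subseteq> B'"
      by (intro exI[of _ "P1 \<union> P2"] exI[of _ "B1 \<union> B2"]) simp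
    with n2 show False by contradiction
  qed
  ultimately show ?thesis by simp
qed

lemma EC_B_sub:
  assumes "pmdp S A D fin fail" "end_component S D fail P B"
  shows "B \<subseteq> S \<times> A"
proof
  fix x assume "x \<in> B"
  then obtain p b where x: "x = (p, b)" "(p, b) \<in> B" by (cases x) auto
  then have "(St p, SA p b) \<in> edges D fail" using assms(2) unfolding end_component_def sub_mdp_def by auto
  then obtain s' where "(p, b, s') \<in> D" by auto
  then show "x \<in> S \<times> A" using assms(1) x unfolding pmdp_def by auto
qed

lemma EC_to_MEC:
  assumes pm: "pmdp S A D fin fail" and ec: "end_component S D fail Y BY"
  shows "\<exists>P B. mec S D fail P B \<and> BY \<subseteq> B \<and> Y \<subseteq> P"
proof -
  have fin: "finite (S \<times> A)" using pm unfolding pmdp_def by auto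
  define Q where "Q = (\<lambda>B'. \<exists>P'. end_component S D fail P' B' \<and> BY \<subseteq> B')"
  have Qb: "\<forall>B'. Q B' \<longrightarrow> card B' < Suc (card (S \<times> A))"
    using EC_B_sub[OF pm] fin unfolding Q_def by (meson card_mono le_imp_less_Suc)
  have "Q BY" using ec unfolding Q_def by auto
  then obtain Bm where Bm: "Q Bm" "\<forall>B'. Q B' \<longrightarrow> card B' \<le> card Bm"
    using ex_has_greatest_nat[of Q BY card, OF _ Qb] by blast
  then obtain Pm where Pm: "end_component S D fail Pm Bm" "BY \<subseteq> Bm" unfolding Q_def by auto
  have "mec S D fail Pm Bm"
    unfolding mec_def
  proof (intro conjI notI)
    show "end_component S D fail Pm Bm" by fact
    assume "\<exists>P' B'. end_component S D fail P' B' \<and> (P', B') \<noteq> (Pm, Bm) \<and> Bm \<subseteq> B'"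
    then obtain P' B' where h: "end_component S D fail P' B'" "(P', B') \<noteq> (Pm, Bm)" "Bm \<subseteq> B'" by auto
    then have "Q B'" using Pm unfolding Q_def by auto
    then have "card B' \<le> card Bm" using Bm by auto
    moreover have "finite B'" using EC_B_sub[OF pm h(1)] fin finite_subset by auto
    ultimately have "Bm = B'" using h(3) by (meson card_seteq)
    then have "P' = Pm" using EC_P_eq[OF h(1)] EC_P_eq[OF Pm(1)] by simp
    then show False using h(2) \<open>Bm = B'\<close> by simp
  qed
  moreover have "Y \<subseteq> Pm" using EC_P_eq[OF ec] EC_P_eq[OF Pm(1)] Pm(2) by auto
  ultimately show ?thesis using Pm by blast
qed

lemma mec_class_eq:
  assumes "mec S D fail P B" "y \<in> P"
  shows "mec_class S D fail y = P"
proof -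
  have "(THE P. \<exists>B. mec S D fail P B \<and> y \<in> P) = P"
  proof (rule the_equality)
    show "\<exists>B. mec S D fail P B \<and> y \<in> P" using assms by blast
  next
    fix P' assume "\<exists>B. mec S D fail P' B \<and> y \<in> P'"
    then obtain B' where "mec S D fail P' B'" "y \<in> P'" by blast
    then show "P' = P" using MEC_unique[OF _ assms(1) _ assms(2)] by blast
  qed
  moreover have "\<exists>P B. mec S D fail P B \<and> y \<in> P" using assms by blast
  ultimately show ?thesis unfolding mec_class_def by simp
qed

lemma no_EC:
  assumes pm: "pmdp S A D fin fail" and iso: "iso_to_mec_quotient S A D fin fail"
    and ec: "end_component S D fail Y BY" and ne: "Y \<noteq> {}"
  shows False
proof -
  obtain P B where PB: "mec S D fail P B" "Y \<subseteq> P" using EC_to_MEC[OF pm ec] by blast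
  obtain f g where fg: "bij_betw f S (quot_states S D fail)" "bij_betw g A A"
     "\<forall>s\<in>S. \<forall>a\<in>A. \<forall>s'\<in>S. (s, a, s') \<in> D \<longleftrightarrow> (f s, g a, f s') \<in> quot_trans S D fail"
    using iso unfolding iso_to_mec_quotient_def by blast
  have finS: "finite S" using pm unfolding pmdp_def by auto
  have PS: "P \<subseteq> S" using PB(1) unfolding mec_def end_component_def sub_mdp_def by auto
  obtain y where y: "y \<in> P" using ne PB(2) by auto
  show False
  proof (cases "\<exists>z\<in>P. z \<noteq> y")
    case True
    then obtain z where z: "z \<in> P" "z \<noteq> y" by auto
    have "mec_class S D fail y = mec_class S D fail z" using mec_class_eq[OF PB(1)] y z by simp
    then have ni: "\<not> inj_on (mec_class S D fail) S" using y z PS inj_onD[of "mec_class S D fail" S y z] by blast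
    have cc: "card (mec_class S D fail ` S) = card S"
      using bij_betw_same_card[OF fg(1)] unfolding quot_states_def by simp
    have inj: "inj_on (mec_class S D fail) S" by (rule iffD2[OF inj_on_iff_eq_card[OF finS]]) (rule cc)
    show False by (rule notE[OF ni inj])
  next
    case False
    then have Py: "P = {y}" using y by blast
    have ex: "\<forall>p\<in>P. \<exists>a. (p, a) \<in> B" using PB(1) unfolding mec_def end_component_def sub_mdp_def by simp
    obtain b where yb: "(y, b) \<in> B" using ex y by blast
    have ed: "\<forall>(p, a)\<in>B. (St p, SA p a) \<in> edges D fail" and sc: "\<forall>(p, a)\<in>B. succs D p a \<subseteq> P"
      using PB(1) unfolding mec_def end_component_def sub_mdp_def by simp_all
    have "(St y, SA y b) \<in> edges D fail" using ed yb by fast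
    then obtain y' where y': "(y, b, y') \<in> D" by auto
    have "succs D y b \<subseteq> P" using sc yb by fast
    then have "y' \<in> P" using y' unfolding succs_def by blast
    then have yy: "(y, b, y) \<in> D" using y' Py by simp
    have "y \<in> S" "b \<in> A" using yy pm unfolding pmdp_def by auto
    then have "(f y, g b, f y) \<in> quot_trans S D fail" using fg(3) yy by blast
    then show False unfolding quot_trans_def by auto
  qed
qed



lemma rw_bounds:
  assumes st: "strategy D \<sigma>" and gp: "graph_preserving D val" and h: "h \<noteq> []"
  shows "0 \<le> reach_within D val \<sigma> fin h n \<and> reach_within D val \<sigma> fin h n \<le> 1"
  using h
proof (induction n arbitrary: h)
  case 0
  then show ?case by simp
next
  case (Suc n)
  define x where "x = last h"
  show ?case
  proof (cases "x = fin")
    case True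
    then show ?thesis by (simp add: x_def)
  next
    case False
    define F where "F b = (\<Sum>s'\<in>succs D x b. val x b s' * reach_within D val \<sigma> fin (h @ [s']) n)" for b
    have IH: "0 \<le> reach_within D val \<sigma> fin (h @ [s']) n \<and> reach_within D val \<sigma> fin (h @ [s']) n \<le> 1" for s'
      using Suc.IH[of "h @ [s']"] by simp
    have F01: "0 \<le> F b \<and> F b \<le> 1" if "b \<in> enabled D x" for b
    proof -
      have ne: "succs D x b \<noteq> {}" using that unfolding enabled_def succs_def by auto
      have vp: "\<forall>s'. val x b s' \<ge> 0" and vs: "(\<Sum>s'\<in>succs D x b. val x b s') = 1"
        using gp ne unfolding graph_preserving_def by blast+
      have "0 \<le> F b" unfolding F_def using vp IH by (intro sum_nonneg mult_nonneg_nonneg) auto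
      moreover have "F b \<le> (\<Sum>s'\<in>succs D x b. val x b s')"
        unfolding F_def using vp IH by (intro sum_mono) (simp add: mult_left_le)
      ultimately show ?thesis using vs by simp
    qed
    have sp: "\<forall>b. 0 \<le> \<sigma> h b" using st Suc.prems unfolding strategy_def by blast
    have eq: "reach_within D val \<sigma> fin h (Suc n) = (\<Sum>b\<in>enabled D x. \<sigma> h b * F b)"
      using False by (simp add: x_def F_def)
    have "0 \<le> (\<Sum>b\<in>enabled D x. \<sigma> h b * F b)"
      using sp F01 by (intro sum_nonneg mult_nonneg_nonneg) auto
    moreover have "(\<Sum>b\<in>enabled D x. \<sigma> h b * F b) \<le> 1"
    proof (cases "enabled D x = {}")
      case True then show ?thesis by simp
    next
      case False
      have s1: "(\<Sum>b\<in>enabled D x. \<sigma> h b) = 1" using st Suc.prems False unfolding strategy_def x_def by blast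
      have "(\<Sum>b\<in>enabled D x. \<sigma> h b * F b) \<le> (\<Sum>b\<in>enabled D x. \<sigma> h b)"
        using sp F01 by (intro sum_mono) (simp add: mult_left_le)
      then show ?thesis using s1 by simp
    qed
    ultimately show ?thesis using eq by simp
  qed
qed

lemma rw_mono:
  assumes st: "strategy D \<sigma>" and gp: "graph_preserving D val" and h: "h \<noteq> []"
  shows "reach_within D val \<sigma> fin h n \<le> reach_within D val \<sigma> fin h (Suc n)"
  using h
proof (induction n arbitrary: h)
  case 0
  have nn: "0 \<le> reach_within D val \<sigma> fin h (Suc 0)" using rw_bounds[OF st gp 0(1), of fin "Suc 0"] by blast
  show ?case
  proof (cases "last h = fin")
    case True then show ?thesis by simp
  next
    case False
    then have z: "reach_within D val \<sigma> fin h 0 = 0" by simp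
    show ?thesis using z nn by linarith
  qed
next
  case (Suc n)
  define x where "x = last h"
  show ?case
  proof (cases "x = fin")
    case True
    then show ?thesis by (simp add: x_def)
  next
    case False
    have sp: "\<forall>b. 0 \<le> \<sigma> h b" using st Suc.prems unfolding strategy_def by blast
    have IH: "reach_within D val \<sigma> fin (h @ [s']) n \<le> reach_within D val \<sigma> fin (h @ [s']) (Suc n)" for s'
      using Suc.IH[of "h @ [s']"] by simp
    have "(\<Sum>b\<in>enabled D x. \<sigma> h b * (\<Sum>s'\<in>succs D x b. val x b s' * reach_within D val \<sigma> fin (h @ [s']) n))
       \<le> (\<Sum>b\<in>enabled D x. \<sigma> h b * (\<Sum>s'\<in>succs D x b. val x b s' * reach_within D val \<sigma> fin (h @ [s']) (Suc n)))"
    proof (rule sum_mono)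
      fix b assume b: "b \<in> enabled D x"
      have ne: "succs D x b \<noteq> {}" using b unfolding enabled_def succs_def by auto
      have vp: "\<forall>s'. val x b s' \<ge> 0" using gp ne unfolding graph_preserving_def by blast
      have inner: "(\<Sum>s'\<in>succs D x b. val x b s' * reach_within D val \<sigma> fin (h @ [s']) n)
         \<le> (\<Sum>s'\<in>succs D x b. val x b s' * reach_within D val \<sigma> fin (h @ [s']) (Suc n))"
      proof (rule sum_mono)
        fix s' show "val x b s' * reach_within D val \<sigma> fin (h @ [s']) n \<le> val x b s' * reach_within D val \<sigma> fin (h @ [s']) (Suc n)"
          using vp IH by (simp add: mult_left_mono)
      qed
      show "\<sigma> h b * (\<Sum>s'\<in>succs D x b. val x b s' * reach_within D val \<sigma> fin (h @ [s']) n)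
         \<le> \<sigma> h b * (\<Sum>s'\<in>succs D x b. val x b s' * reach_within D val \<sigma> fin (h @ [s']) (Suc n))"
        using inner sp by (simp add: mult_left_mono)
    qed
    then show ?thesis using False by (simp add: x_def del: reach_within.simps(2)) (simp add: x_def)
  qed
qed

lemma rw_shift:
  fixes D :: "('s \<times> 'a \<times> 's) set" and x :: 's and h :: "'s list"
  assumes "h \<noteq> []"
  shows "reach_within D val \<sigma> fin (x # h) n = reach_within D val (\<lambda>h. \<sigma> (x # h)) fin h n"
  using assms
proof (induction n arbitrary: h)
  case 0 then show ?case by simp
next
  case (Suc n)
  have IH: "reach_within D val \<sigma> fin (x # h @ [s']) n = reach_within D val (\<lambda>h. \<sigma> (x # h)) fin (h @ [s']) n" for s'
    using Suc.IH[of "h @ [s']"] by simp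
  show ?case using Suc.prems by (simp add: IH)
qed

lemma strategy_shift:
  fixes D :: "('s \<times> 'a \<times> 's) set" and x :: 's
  assumes "strategy D \<sigma>"
  shows "strategy D (\<lambda>h. \<sigma> (x # h))"
  unfolding strategy_def
proof (intro conjI allI impI)
  fix h :: "'s list" and b assume h: "h \<noteq> []"
  then have l: "last (x # h) = last h" by simp
  show "0 \<le> \<sigma> (x # h) b" using assms unfolding strategy_def by blast
  assume "\<sigma> (x # h) b \<noteq> 0"
  then have "b \<in> enabled D (last (x # h))" using assms unfolding strategy_def by blast
  then show "b \<in> enabled D (last h)" using l by simp
next
  fix h :: "'s list" assume h: "h \<noteq> []" "enabled D (last h) \<noteq> {}"
  then have l: "last (x # h) = last h" by simp
  have "(\<Sum>b\<in>enabled D (last (x # h)). \<sigma> (x # h) b) = 1"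
    using assms h l unfolding strategy_def by (metis list.distinct(1))
  then show "(\<Sum>b\<in>enabled D (last h). \<sigma> (x # h) b) = 1" using l by simp
qed

definition mless :: "('s \<times> 'a \<times> 's) set \<Rightarrow> ('s \<Rightarrow> 'a) \<Rightarrow> 's list \<Rightarrow> 'a \<Rightarrow> real" where
  "mless D \<pi> h b = (if \<pi> (last h) \<in> enabled D (last h) \<and> b = \<pi> (last h) then 1 else 0)"

lemma mless_strategy:
  fixes D :: "('s \<times> 'a \<times> 's) set"
  assumes "\<And>x. enabled D x \<noteq> {} \<Longrightarrow> \<pi> x \<in> enabled D x"
    and "\<And>x. finite (enabled D x)"
  shows "strategy D (mless D \<pi>)"
  unfolding strategy_def
proof (intro conjI allI impI)
  fix h :: "'s list" and b assume "h \<noteq> []"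
  show "0 \<le> mless D \<pi> h b" unfolding mless_def by simp
  assume "mless D \<pi> h b \<noteq> 0"
  then show "b \<in> enabled D (last h)" unfolding mless_def by (auto split: if_splits)
next
  fix h :: "'s list" assume h: "h \<noteq> []" "enabled D (last h) \<noteq> {}"
  then have p: "\<pi> (last h) \<in> enabled D (last h)" using assms(1) by blast
  have "(\<Sum>b\<in>enabled D (last h). mless D \<pi> h b) = (\<Sum>b\<in>enabled D (last h). if b = \<pi> (last h) then 1 else 0)"
    unfolding mless_def using p by simp
  also have "\<dots> = 1" using p assms(2) by simp
  finally show "(\<Sum>b\<in>enabled D (last h). mless D \<pi> h b) = 1" .
qed

lemma rw_mless_last:
  assumes "h \<noteq> []"
  shows "reach_within D val (mless D \<pi>) fin h n = reach_within D val (mless D \<pi>) fin [last h] n"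
  using assms
proof (induction n arbitrary: h)
  case 0 then show ?case by simp
next
  case (Suc n)
  have I1: "reach_within D val (mless D \<pi>) fin (h @ [s']) n = reach_within D val (mless D \<pi>) fin [s'] n" for s'
    using Suc.IH[of "h @ [s']"] by simp
  have I2: "reach_within D val (mless D \<pi>) fin [last h, s'] n = reach_within D val (mless D \<pi>) fin [s'] n" for s'
    using Suc.IH[of "[last h, s']"] by simp
  have m: "mless D \<pi> h b = mless D \<pi> [last h] b" for b unfolding mless_def by simp
  show ?case using Suc.prems by (simp add: I1 I2 m)
qed

lemma rw_mless_step:
  assumes "x \<noteq> fin" "finite (enabled D x)"
  shows "reach_within D val (mless D \<pi>) fin [x] (Suc n) =
    (if \<pi> x \<in> enabled D x then (\<Sum>x'\<in>succs D x (\<pi> x). val x (\<pi> x) x' * reach_within D val (mless D \<pi>) fin [x'] n) else 0)"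
proof -
  have I2: "reach_within D val (mless D \<pi>) fin [x, s'] n = reach_within D val (mless D \<pi>) fin [s'] n" for s'
    using rw_mless_last[of "[x, s']"] by simp
  show ?thesis
  proof (cases "\<pi> x \<in> enabled D x")
    case True
    have "reach_within D val (mless D \<pi>) fin [x] (Suc n) = (\<Sum>b\<in>enabled D x. (if b = \<pi> x then 1 else 0) *
          (\<Sum>s'\<in>succs D x b. val x b s' * reach_within D val (mless D \<pi>) fin [s'] n))"
      using assms True by (simp add: I2 mless_def)
    also have "\<dots> = (\<Sum>s'\<in>succs D x (\<pi> x). val x (\<pi> x) s' * reach_within D val (mless D \<pi>) fin [s'] n)"
    proof -
      define F where "F b = (\<Sum>s'\<in>succs D x b. val x b s' * reach_within D val (mless D \<pi>) fin [s'] n)" for b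
      have "(\<Sum>b\<in>enabled D x. (if b = \<pi> x then 1 else 0) * F b) = (\<Sum>b\<in>enabled D x. if b = \<pi> x then F b else 0)"
        by (rule sum.cong) auto
      also have "\<dots> = F (\<pi> x)" using True assms(2) by simp
      finally show ?thesis unfolding F_def .
    qed
    finally show ?thesis using True by simp
  next
    case False
    then show ?thesis using assms by (simp add: mless_def)
  qed
qed

lemma rp_props:
  assumes st: "strategy D \<sigma>" and gp: "graph_preserving D val"
  shows "reach_within D val \<sigma> fin [x] n \<le> reach_prob D val \<sigma> fin x"
    and "0 \<le> reach_prob D val \<sigma> fin x" and "reach_prob D val \<sigma> fin x \<le> 1"
    and "bdd_above (range (\<lambda>n. reach_within D val \<sigma> fin [x] n))"
proof -
  have b: "\<And>n. 0 \<le> reach_within D val \<sigma> fin [x] n \<and> reach_within D val \<sigma> fin [x] n \<le> 1"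
    using rw_bounds[OF st gp] by simp
  show bd: "bdd_above (range (\<lambda>n. reach_within D val \<sigma> fin [x] n))"
    using b by (intro bdd_aboveI[of _ 1]) auto
  show u: "reach_within D val \<sigma> fin [x] n \<le> reach_prob D val \<sigma> fin x" for n
    unfolding reach_prob_def by (rule cSUP_upper[OF _ bd]) simp
  show "0 \<le> reach_prob D val \<sigma> fin x" using u[of 0] b[of 0] by linarith
  show "reach_prob D val \<sigma> fin x \<le> 1" unfolding reach_prob_def
    using b by (intro cSUP_least) auto
qed

lemma mr_props:
  assumes st0: "strategy D \<sigma>0" and gp: "graph_preserving D val"
  shows "\<And>\<sigma>. strategy D \<sigma> \<Longrightarrow> reach_prob D val \<sigma> fin x \<le> max_rew D val fin x"
    and "0 \<le> max_rew D val fin x" and "max_rew D val fin x \<le> 1"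
proof -
  have bd: "bdd_above ((\<lambda>\<sigma>. reach_prob D val \<sigma> fin x) ` {\<sigma>. strategy D \<sigma>})"
    using rp_props(3)[OF _ gp] by (intro bdd_aboveI[of _ 1]) auto
  show u: "\<And>\<sigma>. strategy D \<sigma> \<Longrightarrow> reach_prob D val \<sigma> fin x \<le> max_rew D val fin x"
    unfolding max_rew_def by (rule cSUP_upper[OF _ bd]) simp
  show "0 \<le> max_rew D val fin x" using u[OF st0] rp_props(2)[OF st0 gp, where fin=fin and x=x] by linarith
  show "max_rew D val fin x \<le> 1" unfolding max_rew_def
    using st0 rp_props(3)[OF _ gp] by (intro cSUP_least) auto
qed

lemma bellman_le:
  assumes st0: "strategy D \<sigma>0" and gp: "graph_preserving D val" and x: "x \<noteq> fin"
    and fe: "finite (enabled D x)" and ne: "enabled D x \<noteq> {}"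
  shows "max_rew D val fin x \<le> Max ((\<lambda>b. \<Sum>x'\<in>succs D x b. val x b x' * max_rew D val fin x') ` enabled D x)"
proof -
  define q where "q b = (\<Sum>x'\<in>succs D x b. val x b x' * max_rew D val fin x')" for b
  define m where "m = Max (q ` enabled D x)"
  have qm: "q b \<le> m" if "b \<in> enabled D x" for b unfolding m_def using fe that by simp
  have vp: "\<forall>s'. val x b s' \<ge> 0" if "b \<in> enabled D x" for b
  proof -
    have "succs D x b \<noteq> {}" using that unfolding enabled_def succs_def by auto
    then show ?thesis using gp unfolding graph_preserving_def by blast
  qed
  have q0: "0 \<le> q b" if "b \<in> enabled D x" for b
    unfolding q_def using vp[OF that] mr_props(2)[OF st0 gp] by (intro sum_nonneg mult_nonneg_nonneg) auto
  obtain b1 where "b1 \<in> enabled D x" using ne by blast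
  then have m0: "0 \<le> m" using q0 qm by force
  have "reach_prob D val \<sigma> fin x \<le> m" if st: "strategy D \<sigma>" for \<sigma>
    unfolding reach_prob_def
  proof (intro cSUP_least)
    fix n
    show "reach_within D val \<sigma> fin [x] n \<le> m"
    proof (cases n)
      case 0 then show ?thesis using x m0 by simp
    next
      case (Suc k)
      have sp: "\<forall>b. 0 \<le> \<sigma> [x] b" using st unfolding strategy_def by auto
      have s1: "(\<Sum>b\<in>enabled D x. \<sigma> [x] b) = 1"
        using st ne unfolding strategy_def by (metis last.simps list.distinct(1))
      have inner: "(\<Sum>x'\<in>succs D x b. val x b x' * reach_within D val \<sigma> fin [x, x'] k) \<le> q b"
        if b: "b \<in> enabled D x" for b
        unfolding q_def
      proof (intro sum_mono mult_left_mono)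
        fix x' 
        have "reach_within D val \<sigma> fin [x, x'] k = reach_within D val (\<lambda>h. \<sigma> (x # h)) fin [x'] k"
          using rw_shift[of "[x']"] by simp
        also have "\<dots> \<le> reach_prob D val (\<lambda>h. \<sigma> (x # h)) fin x'"
          by (rule rp_props(1)[OF strategy_shift[OF st] gp])
        also have "\<dots> \<le> max_rew D val fin x'"
          by (rule mr_props(1)[OF st0 gp strategy_shift[OF st]])
        finally show "reach_within D val \<sigma> fin [x, x'] k \<le> max_rew D val fin x'" .
        show "0 \<le> val x b x'" using vp[OF b] by simp
      qed
      have "reach_within D val \<sigma> fin [x] n = (\<Sum>b\<in>enabled D x. \<sigma> [x] b *
            (\<Sum>x'\<in>succs D x b. val x b x' * reach_within D val \<sigma> fin [x, x'] k))"
        using Suc x by simp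
      also have "\<dots> \<le> (\<Sum>b\<in>enabled D x. \<sigma> [x] b * m)"
        using sp inner qm by (intro sum_mono mult_left_mono) (auto intro: order_trans)
      also have "\<dots> = m" using s1 by (simp add: sum_distrib_right[symmetric])
      finally show ?thesis .
    qed
  qed simp
  then have "max_rew D val fin x \<le> m" unfolding max_rew_def using st0 by (intro cSUP_least) auto
  then show ?thesis unfolding m_def q_def .
qed

lemma bellman_dead:
  assumes st0: "strategy D \<sigma>0" and x: "x \<noteq> fin" and e: "enabled D x = {}"
  shows "max_rew D val fin x \<le> 0"
proof -
  have "reach_prob D val \<sigma> fin x \<le> 0" for \<sigma>
    unfolding reach_prob_def
  proof (intro cSUP_least)
    fix n show "reach_within D val \<sigma> fin [x] n \<le> 0" using x e by (cases n) simp_all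
  qed simp
  then show ?thesis unfolding max_rew_def using st0 by (intro cSUP_least) auto
qed



lemma closed_EC:
  fixes D :: "('s \<times> 'a \<times> 's) set" and \<pi> :: "'s \<Rightarrow> 'a"
  assumes finX: "finite X" and ne: "X \<noteq> {}" and XS: "X \<subseteq> S"
    and ed: "\<And>x. x \<in> X \<Longrightarrow> (St x, SA x (\<pi> x)) \<in> edges D fail"
    and cl: "\<And>x. x \<in> X \<Longrightarrow> succs D x (\<pi> x) \<subseteq> X"
  shows "\<exists>P B. end_component S D fail P B \<and> P \<noteq> {}"
proof -
  define R where "R = {(x, y). x \<in> X \<and> y \<in> succs D x (\<pi> x)}"
  define reach where "reach x = {y. (x, y) \<in> R\<^sup>*}" for x
  have reachX: "y \<in> X" if "(x, y) \<in> R\<^sup>*" "x \<in> X" for x y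
    using that
  proof (induction rule: rtrancl_induct)
    case base then show ?case by simp
  next
    case (step y z)
    then have "y \<in> X" "z \<in> succs D y (\<pi> y)" unfolding R_def by auto
    then show ?case using cl by blast
  qed
  have rX: "reach x \<subseteq> X" if "x \<in> X" for x using reachX that unfolding reach_def by blast
  obtain x0 where x0: "x0 \<in> X" "\<forall>x. x \<in> X \<longrightarrow> card (reach x0) \<le> card (reach x)"
    using ex_has_least_nat[of "\<lambda>x. x \<in> X" _ "\<lambda>x. card (reach x)"] ne by blast
  define Y where "Y = reach x0"
  have YX: "Y \<subseteq> X" unfolding Y_def using rX x0(1) .
  have x0Y: "x0 \<in> Y" unfolding Y_def reach_def by simp
  have bk: "(y, x0) \<in> R\<^sup>*" if y: "y \<in> Y" for y
  proof -
    have yx0: "(x0, y) \<in> R\<^sup>*" using y unfolding Y_def reach_def by simp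
    have sub: "reach y \<subseteq> Y"
    proof
      fix z assume "z \<in> reach y"
      then have "(y, z) \<in> R\<^sup>*" unfolding reach_def by simp
      then have "(x0, z) \<in> R\<^sup>*" using yx0 by (rule rtrancl_trans[rotated])
      then show "z \<in> Y" unfolding Y_def reach_def by simp
    qed
    have fY: "finite Y" using YX finX finite_subset by blast
    have "card Y \<le> card (reach y)" using x0(2) YX y unfolding Y_def by blast
    then have "reach y = Y" using card_seteq[OF fY sub] by simp
    then show ?thesis using x0Y unfolding reach_def by blast
  qed
  have clY: "z \<in> Y" if "y \<in> Y" "z \<in> succs D y (\<pi> y)" for y z
  proof -
    have "(y, z) \<in> R" using that YX unfolding R_def by blast
    moreover have "(x0, y) \<in> R\<^sup>*" using that(1) unfolding Y_def reach_def by simp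
    ultimately show ?thesis unfolding Y_def reach_def by (simp add: rtrancl_into_rtrancl)
  qed
  define B where "B = (\<lambda>y. (y, \<pi> y)) ` Y"
  define V where "V = sub_vertices Y B"
  have V: "V = St ` Y \<union> (\<lambda>y. SA y (\<pi> y)) ` Y" unfolding V_def sub_vertices_def B_def by auto
  define E' where "E' = edges D fail \<inter> (V \<times> V)"
  have stepE: "(St y, St z) \<in> E'\<^sup>*" if "y \<in> Y" "z \<in> succs D y (\<pi> y)" for y z
  proof -
    have zY: "z \<in> Y" using clY that by blast
    have e1: "(St y, SA y (\<pi> y)) \<in> E'" unfolding E'_def V using ed that(1) YX by blast
    have "(y, \<pi> y, z) \<in> D" using that(2) unfolding succs_def by simp
    then have e2: "(SA y (\<pi> y), St z) \<in> E'" unfolding E'_def V using that(1) zY by auto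
    show ?thesis using e1 e2 by (meson r_into_rtrancl rtrancl_into_rtrancl)
  qed
  have path: "y \<in> Y \<and> (St x, St y) \<in> E'\<^sup>*" if "(x, y) \<in> R\<^sup>*" "x \<in> Y" for x y
    using that
  proof (induction rule: rtrancl_induct)
    case base then show ?case by simp
  next
    case (step y z)
    then have yY: "y \<in> Y" and p: "(St x, St y) \<in> E'\<^sup>*" by auto
    have zs: "z \<in> succs D y (\<pi> y)" using step(2) unfolding R_def by simp
    have "z \<in> Y" using clY yY zs by blast
    moreover have "(St x, St z) \<in> E'\<^sup>*" using p stepE[OF yY zs] by (rule rtrancl_trans)
    ultimately show ?case by simp
  qed
  have to: "(u, St x0) \<in> E'\<^sup>*" if "u \<in> V" for u
  proof -
    from that obtain y where y: "y \<in> Y" "u = St y \<or> u = SA y (\<pi> y)" unfolding V by blast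
    have p: "(St y, St x0) \<in> E'\<^sup>*" using path[OF bk[OF y(1)] y(1)] by simp
    show ?thesis
    proof (cases "u = St y")
      case True then show ?thesis using p by simp
    next
      case False
      then have u: "u = SA y (\<pi> y)" using y by simp
      obtain s' where s': "(y, \<pi> y, s') \<in> D" using ed[of y] y(1) YX by auto
      then have s'Y: "s' \<in> Y" using clY y(1) unfolding succs_def by simp
      have e: "(u, St s') \<in> E'" unfolding E'_def V u using s' y(1) s'Y by auto
      have "(St s', St x0) \<in> E'\<^sup>*" using path[OF bk[OF s'Y] s'Y] by simp
      then show ?thesis using e by (meson converse_rtrancl_into_rtrancl)
    qed
  qed
  have from_: "(St x0, v) \<in> E'\<^sup>*" if "v \<in> V" for v
  proof -
    from that obtain y where y: "y \<in> Y" "v = St y \<or> v = SA y (\<pi> y)" unfolding V by blast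
    have yr: "(x0, y) \<in> R\<^sup>*" using y(1) unfolding Y_def reach_def by simp
    have p: "(St x0, St y) \<in> E'\<^sup>*" using path[OF yr x0Y] by simp
    show ?thesis
    proof (cases "v = St y")
      case True then show ?thesis using p by simp
    next
      case False
      then have v: "v = SA y (\<pi> y)" using y by simp
      have "(St y, v) \<in> E'" unfolding E'_def V v using ed y(1) YX by blast
      then show ?thesis using p by (meson rtrancl_into_rtrancl)
    qed
  qed
  have sm: "sub_mdp S D fail Y B"
    unfolding sub_mdp_def
  proof (intro conjI ballI)
    show "Y \<subseteq> S" using YX XS by simp
  next
    fix pa assume "pa \<in> B"
    then obtain p where p: "p \<in> Y" "pa = (p, \<pi> p)" unfolding B_def by blast
    show "case pa of (p, a) \<Rightarrow> (St p, SA p a) \<in> edges D fail" using p ed YX by auto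
    show "case pa of (p, a) \<Rightarrow> succs D p a \<subseteq> Y" using p clY by auto
  next
    fix p assume "p \<in> Y"
    then show "\<exists>a. (p, a) \<in> B" unfolding B_def by blast
  qed
  have "end_component S D fail Y B"
    unfolding end_component_def
  proof (intro conjI ballI)
    show "sub_mdp S D fail Y B" by (rule sm)
    fix u v assume "u \<in> sub_vertices Y B" "v \<in> sub_vertices Y B"
    then have "u \<in> V" "v \<in> V" unfolding V_def by auto
    then have "(u, v) \<in> E'\<^sup>*" using to from_ rtrancl_trans by metis
    then show "(u, v) \<in> (edges D fail \<inter> sub_vertices Y B \<times> sub_vertices Y B)\<^sup>*"
      unfolding E'_def V_def .
  qed
  then show ?thesis using x0Y by blast
qed



theorem theorem6:
  fixes S :: "'s set" and A :: "'a set" and \<Delta> :: "('s \<times> 'a \<times> 's) set"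
    and fin fail :: 's and val :: "'s \<Rightarrow> 'a \<Rightarrow> 's \<Rightarrow> real" and s :: 's and a :: 'a
  assumes "pmdp S A \<Delta> fin fail"
    and "iso_to_mec_quotient S A \<Delta> fin fail"
    and "graph_preserving \<Delta> val"
    and "s \<in> S" and "a \<in> A"
    and "dominated \<Delta> fin (SA s a) (vsucc \<Delta> fail (St s) - {SA s a})"
  shows "max_rew \<Delta> val fin s = max_rew (\<Delta> - {(s, a, s') | s'. s' \<in> S}) val fin s"
proof -
  note pm = assms(1) and iso = assms(2) and gp = assms(3) and sS = assms(4)
  have finS: "finite S" and finA: "finite A" and finfail: "fin \<noteq> fail"
    and DS: "\<Delta> \<subseteq> (S - {fin, fail}) \<times> A \<times> S"
    using pm unfolding pmdp_def by auto
  define N where "N = \<Delta> - {(s, a, s') | s'. s' \<in> S}"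
  have memN: "(x, b, y) \<in> N \<longleftrightarrow> (x, b, y) \<in> \<Delta> \<and> (x, b) \<noteq> (s, a)" for x b y
  proof
    assume "(x, b, y) \<in> N" then show "(x, b, y) \<in> \<Delta> \<and> (x, b) \<noteq> (s, a)"
      unfolding N_def using DS by blast
  next
    assume h: "(x, b, y) \<in> \<Delta> \<and> (x, b) \<noteq> (s, a)"
    then show "(x, b, y) \<in> N" unfolding N_def by blast
  qed
  have enN: "b \<in> enabled N x \<longleftrightarrow> b \<in> enabled \<Delta> x \<and> (x, b) \<noteq> (s, a)" for x b
    unfolding enabled_def using memN by blast
  have sucN: "succs N x b = succs \<Delta> x b" if "(x, b) \<noteq> (s, a)" for x b
    unfolding succs_def using memN that by blast
  have sucNsa: "succs N s a = {}" unfolding succs_def using memN by blast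
  have enD_A: "enabled \<Delta> x \<subseteq> A" for x unfolding enabled_def using DS by blast
  have finEnD: "finite (enabled \<Delta> x)" for x using enD_A finA finite_subset by blast
  have finEnN: "finite (enabled N x)" for x
    using finEnD[of x] enN[of _ x] by (metis (no_types, lifting) finite_subset subsetI)
  have sucS: "succs \<Delta> x b \<subseteq> S" for x b unfolding succs_def using DS by blast
  have finSuc: "finite (succs \<Delta> x b)" for x b using sucS finS finite_subset by blast
  have gpN: "graph_preserving N val"
    unfolding graph_preserving_def
  proof (intro allI impI)
    fix x b assume ne: "succs N x b \<noteq> {}"
    then have xb: "(x, b) \<noteq> (s, a)" using sucNsa by blast
    then have ne': "succs \<Delta> x b \<noteq> {}" using ne sucN by simp
    show "(\<forall>s'. 0 \<le> val x b s' \<and> (0 < val x b s') = (s' \<in> succs N x b)) \<and> (\<Sum>s'\<in>succs N x b. val x b s') = 1"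
      using gp ne' sucN[OF xb] unfolding graph_preserving_def by simp
  qed
  obtain w where w: "w \<in> vsucc \<Delta> fail (St s) - {SA s a}"
    "rew_v \<Delta> val fin (SA s a) \<le> rew_v \<Delta> val fin w"
    using assms(6) gp unfolding dominated_def by blast
  obtain b0 where b0: "w = SA s b0" "b0 \<noteq> a" "b0 \<in> enabled \<Delta> s"
  proof (cases w)
    case (St q) then show ?thesis using w(1) unfolding vsucc_def by simp
  next
    case (SA q b)
    have e: "(St s, w) \<in> edges \<Delta> fail" using w(1) unfolding vsucc_def by blast
    then have "(St s, SA q b) \<in> edges \<Delta> fail" using SA by (simp only:)
    then obtain s' where qs: "q = s" and "(s, b, s') \<in> \<Delta>" unfolding edges_def by blast
    then have "\<exists>s'. (s, b, s') \<in> \<Delta>" by blast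
    then have "b \<in> enabled \<Delta> s" unfolding enabled_def by blast
    moreover have "b \<noteq> a" using w(1) SA qs by simp
    moreover have "w = SA s b" using SA qs by simp
    ultimately show ?thesis using that by blast
  qed
  have b0N: "b0 \<in> enabled N s" using b0 enN by simp
  have dom: "rew_v \<Delta> val fin (SA s a) \<le> rew_v \<Delta> val fin (SA s b0)" using w(2) b0(1) by simp
  have enDN: "enabled N x \<noteq> {}" if neD: "enabled \<Delta> x \<noteq> {}" for x
  proof -
    obtain b where b: "b \<in> enabled \<Delta> x" using neD by blast
    show ?thesis
    proof (cases "(x, b) = (s, a)")
      case True then show ?thesis using b0N by auto
    next
      case False then show ?thesis using b enN by blast
    qed
  qed
  have stratND: "strategy \<Delta> \<sigma>" if st: "strategy N \<sigma>" for \<sigma>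
    unfolding strategy_def
  proof (intro conjI allI impI)
    fix h :: "'s list" and b assume h: "h \<noteq> []"
    show "0 \<le> \<sigma> h b" using st h unfolding strategy_def by blast
    assume "\<sigma> h b \<noteq> 0"
    then have "b \<in> enabled N (last h)" using st h unfolding strategy_def by blast
    then show "b \<in> enabled \<Delta> (last h)" using enN[of b "last h"] by simp
  next
    fix h :: "'s list" assume h: "h \<noteq> []" "enabled \<Delta> (last h) \<noteq> {}"
    have st2: "\<forall>h. h \<noteq> [] \<longrightarrow> enabled N (last h) \<noteq> {} \<longrightarrow> (\<Sum>b\<in>enabled N (last h). \<sigma> h b) = 1"
      using st unfolding strategy_def by (rule conjunct2)
    have s1: "(\<Sum>b\<in>enabled N (last h). \<sigma> h b) = 1" using st2 h(1) enDN[OF h(2)] by simp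
    have z: "\<forall>b\<in>enabled \<Delta> (last h) - enabled N (last h). \<sigma> h b = 0"
      using st h(1) unfolding strategy_def by blast
    have "(\<Sum>b\<in>enabled N (last h). \<sigma> h b) = (\<Sum>b\<in>enabled \<Delta> (last h). \<sigma> h b)"
      by (rule sum.mono_neutral_left[OF finEnD _ z]) (use enN in blast)
    then show "(\<Sum>b\<in>enabled \<Delta> (last h). \<sigma> h b) = 1" using s1 by simp
  qed
  have rwND: "reach_within N val \<sigma> fin h n = reach_within \<Delta> val \<sigma> fin h n"
    if st: "strategy N \<sigma>" and h: "h \<noteq> []" for \<sigma> h n
    using h
  proof (induction n arbitrary: h)
    case 0 then show ?case by simp
  next
    case (Suc n)
    define l where "l = last h"
    show ?case
    proof (cases "l = fin")
      case True then show ?thesis by (simp add: l_def)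
    next
      case False
      have IH: "reach_within N val \<sigma> fin (h @ [s']) n = reach_within \<Delta> val \<sigma> fin (h @ [s']) n" for s'
        using Suc.IH[of "h @ [s']"] by simp
      have z: "\<forall>b\<in>enabled \<Delta> l - enabled N l. \<sigma> h b = 0"
        using st Suc.prems unfolding strategy_def l_def by blast
      have "(\<Sum>b\<in>enabled N l. \<sigma> h b * (\<Sum>s'\<in>succs N l b. val l b s' * reach_within N val \<sigma> fin (h @ [s']) n))
          = (\<Sum>b\<in>enabled N l. \<sigma> h b * (\<Sum>s'\<in>succs \<Delta> l b. val l b s' * reach_within \<Delta> val \<sigma> fin (h @ [s']) n))"
      proof (rule sum.cong[OF refl])
        fix b assume "b \<in> enabled N l"
        then have "(l, b) \<noteq> (s, a)" using enN by blast
        then show "\<sigma> h b * (\<Sum>s'\<in>succs N l b. val l b s' * reach_within N val \<sigma> fin (h @ [s']) n)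
          = \<sigma> h b * (\<Sum>s'\<in>succs \<Delta> l b. val l b s' * reach_within \<Delta> val \<sigma> fin (h @ [s']) n)"
          using sucN IH by simp
      qed
      also have "\<dots> = (\<Sum>b\<in>enabled \<Delta> l. \<sigma> h b * (\<Sum>s'\<in>succs \<Delta> l b. val l b s' * reach_within \<Delta> val \<sigma> fin (h @ [s']) n))"
        by (rule sum.mono_neutral_left[OF finEnD]) (use enN z in auto)
      finally show ?thesis using False by (simp add: l_def)
    qed
  qed
  define v where "v = max_rew \<Delta> val fin"
  define q where "q x b = (\<Sum>x'\<in>succs \<Delta> x b. val x b x' * v x')" for x b
  define \<pi> where "\<pi> x = (SOME b. b \<in> enabled N x \<and> (\<forall>b'\<in>enabled N x. q x b' \<le> q x b))" for x
  have \<pi>prop: "\<pi> x \<in> enabled N x \<and> (\<forall>b'\<in>enabled N x. q x b' \<le> q x (\<pi> x))" if ne: "enabled N x \<noteq> {}" for x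
  proof -
    have "Max (q x ` enabled N x) \<in> q x ` enabled N x" using finEnN ne by simp
    then obtain b where b: "b \<in> enabled N x" "q x b = Max (q x ` enabled N x)" by force
    have "\<forall>b'\<in>enabled N x. q x b' \<le> q x b" using b(2) finEnN by simp
    then have "\<exists>b. b \<in> enabled N x \<and> (\<forall>b'\<in>enabled N x. q x b' \<le> q x b)" using b(1) by blast
    then show ?thesis unfolding \<pi>_def by (rule someI_ex)
  qed
  define \<sigma> where "\<sigma> = mless N \<pi>"
  have stN: "strategy N \<sigma>" unfolding \<sigma>_def
    by (rule mless_strategy) (use \<pi>prop finEnN in auto)
  have stD: "strategy \<Delta> \<sigma>" by (rule stratND[OF stN])
  have partA: "max_rew N val fin s \<le> max_rew \<Delta> val fin s"
    unfolding max_rew_def[of N]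
  proof (rule cSUP_least)
    show "{\<sigma>. strategy N \<sigma>} \<noteq> {}" using stN by blast
  next
    fix \<sigma>' assume "\<sigma>' \<in> {\<sigma>. strategy N \<sigma>}"
    then have st': "strategy N \<sigma>'" by simp
    have "reach_prob N val \<sigma>' fin s = reach_prob \<Delta> val \<sigma>' fin s"
      unfolding reach_prob_def using rwND[OF st'] by simp
    also have "\<dots> \<le> max_rew \<Delta> val fin s" by (rule mr_props(1)[OF stD gp stratND[OF st']])
    finally show "reach_prob N val \<sigma>' fin s \<le> max_rew \<Delta> val fin s" .
  qed
  have vle: "v x \<le> q x (\<pi> x)" if x: "x \<noteq> fin" and ne: "enabled N x \<noteq> {}" for x
  proof -
    have neD: "enabled \<Delta> x \<noteq> {}" using ne enN by blast
    have v1: "v x \<le> Max (q x ` enabled \<Delta> x)"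
      unfolding v_def q_def by (rule bellman_le[OF stD gp x finEnD neD])
    have "Max (q x ` enabled \<Delta> x) \<in> q x ` enabled \<Delta> x" using finEnD neD by simp
    then obtain b where b: "b \<in> enabled \<Delta> x" "Max (q x ` enabled \<Delta> x) = q x b" by force
    have p: "\<pi> x \<in> enabled N x" "\<forall>b'\<in>enabled N x. q x b' \<le> q x (\<pi> x)" using \<pi>prop[OF ne] by auto
    have "q x b \<le> q x (\<pi> x)"
    proof (cases "(x, b) = (s, a)")
      case False
      then have "b \<in> enabled N x" using b(1) enN by blast
      then show ?thesis using p by blast
    next
      case True
      then have xs: "x = s" "b = a" by auto
      have "q s a = rew_v \<Delta> val fin (SA s a)" unfolding q_def v_def by simp
      also have "\<dots> \<le> rew_v \<Delta> val fin (SA s b0)" by (rule dom)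
      also have "\<dots> = q s b0" unfolding q_def v_def by simp
      also have "\<dots> \<le> q s (\<pi> s)" using p b0N xs by blast
      finally show ?thesis using xs by simp
    qed
    then show ?thesis using v1 b(2) by simp
  qed
  have vdead: "v x \<le> 0" if x: "x \<noteq> fin" and e: "enabled N x = {}" for x
  proof -
    have "enabled \<Delta> x = {}" using enDN e by blast
    then show ?thesis unfolding v_def by (rule bellman_dead[OF stD x])
  qed
  have v01: "0 \<le> v x \<and> v x \<le> 1" for x unfolding v_def using mr_props(2,3)[OF stD gp] by blast
  define r where "r x = reach_prob N val \<sigma> fin x" for x
  have rlim: "(\<lambda>n. reach_within N val \<sigma> fin [x] n) \<longlonglongrightarrow> r x" for x
  proof -
    have inc: "incseq (\<lambda>n. reach_within N val \<sigma> fin [x] n)"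
      by (rule incseq_SucI) (rule rw_mono[OF stN gpN], simp)
    show ?thesis unfolding r_def reach_prob_def
      by (rule LIMSEQ_incseq_SUP[OF rp_props(4)[OF stN gpN] inc])
  qed
  have rfix: "r x = (\<Sum>x'\<in>succs N x (\<pi> x). val x (\<pi> x) x' * r x')"
    if x: "x \<noteq> fin" and p: "\<pi> x \<in> enabled N x" for x
  proof -
    have l1: "(\<lambda>n. reach_within N val \<sigma> fin [x] (Suc n)) \<longlonglongrightarrow> r x"
      using LIMSEQ_Suc[OF rlim[of x]] .
    have eq: "reach_within N val \<sigma> fin [x] (Suc n) = (\<Sum>x'\<in>succs N x (\<pi> x). val x (\<pi> x) x' * reach_within N val \<sigma> fin [x'] n)" for n
      unfolding \<sigma>_def using rw_mless_step[OF x finEnN, of val \<pi> n] p by simp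
    have l2: "(\<lambda>n. \<Sum>x'\<in>succs N x (\<pi> x). val x (\<pi> x) x' * reach_within N val \<sigma> fin [x'] n)
        \<longlonglongrightarrow> (\<Sum>x'\<in>succs N x (\<pi> x). val x (\<pi> x) x' * r x')"
      by (intro tendsto_sum tendsto_mult_left rlim)
    show ?thesis using LIMSEQ_unique[OF l1] l2 eq by simp
  qed
  have r01: "0 \<le> r x \<and> r x \<le> 1" for x unfolding r_def using rp_props(2,3)[OF stN gpN] by blast
  have rfin: "1 \<le> r fin" unfolding r_def using rp_props(1)[OF stN gpN, where fin=fin and x=fin and n=0] by simp
  \<comment> \<open>maximum principle\<close>
  define d where "d x = v x - r x" for x
  define M where "M = Max (d ` S)"
  have dM: "d x \<le> M" if "x \<in> S" for x unfolding M_def using finS that by simp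
  have dfin: "d fin \<le> 0" unfolding d_def using v01[of fin] rfin by simp
  have enfail: "enabled N fail = {}" unfolding enabled_def using memN DS by blast
  have dfail: "d fail \<le> 0" unfolding d_def using vdead[OF finfail[symmetric] enfail] r01[of fail] by simp
  have M0: "M \<le> 0"
  proof (rule ccontr)
    assume "\<not> M \<le> 0"
    then have Mpos: "0 < M" by simp
    define X where "X = {x \<in> S. d x = M}"
    have XS: "X \<subseteq> S" unfolding X_def by blast
    have finX: "finite X" using XS finS finite_subset by blast
    have "M \<in> d ` S" unfolding M_def using finS sS by (intro Max_in) auto
    then have neX: "X \<noteq> {}" unfolding X_def by force
    have props: "(St x, SA x (\<pi> x)) \<in> edges \<Delta> fail \<and> succs \<Delta> x (\<pi> x) \<subseteq> X" if xX: "x \<in> X" for x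
    proof -
      have xS: "x \<in> S" and dx: "d x = M" using xX unfolding X_def by auto
      have xf: "x \<noteq> fin" using dx dfin Mpos by auto
      have ne: "enabled N x \<noteq> {}"
      proof
        assume "enabled N x = {}"
        then have "v x \<le> 0" using vdead xf by blast
        then have "d x \<le> 0" unfolding d_def using r01[of x] by simp
        then show False using dx Mpos by simp
      qed
      have p: "\<pi> x \<in> enabled N x" using \<pi>prop[OF ne] by blast
      then have xp: "(x, \<pi> x) \<noteq> (s, a)" using enN by blast
      let ?T = "succs \<Delta> x (\<pi> x)"
      have neT: "?T \<noteq> {}" using p enN unfolding enabled_def succs_def by blast
      have vp: "\<forall>y. 0 \<le> val x (\<pi> x) y \<and> (0 < val x (\<pi> x) y) = (y \<in> ?T)" and vs: "(\<Sum>y\<in>?T. val x (\<pi> x) y) = 1"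
        using gp neT unfolding graph_preserving_def by blast+
      have rx: "r x = (\<Sum>y\<in>?T. val x (\<pi> x) y * r y)" using rfix[OF xf p] sucN[OF xp] by simp
      have "d x \<le> (\<Sum>y\<in>?T. val x (\<pi> x) y * v y) - (\<Sum>y\<in>?T. val x (\<pi> x) y * r y)"
        unfolding d_def using vle[OF xf ne] rx unfolding q_def by simp
      also have "\<dots> = (\<Sum>y\<in>?T. val x (\<pi> x) y * d y)"
        unfolding d_def by (simp add: sum_subtractf right_diff_distrib)
      finally have dle: "d x \<le> (\<Sum>y\<in>?T. val x (\<pi> x) y * d y)" .
      have cl: "?T \<subseteq> X"
      proof
        fix y assume yT: "y \<in> ?T"
        have yS: "y \<in> S" using yT sucS by blast
        show "y \<in> X"
        proof (rule ccontr)
          assume "y \<notin> X"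
          then have dy: "d y < M" using dM[OF yS] yS unfolding X_def by force
          have "(\<Sum>z\<in>?T. val x (\<pi> x) z * d z) < (\<Sum>z\<in>?T. val x (\<pi> x) z * M)"
          proof (rule sum_strict_mono_ex1[OF finSuc])
            show "\<forall>z\<in>?T. val x (\<pi> x) z * d z \<le> val x (\<pi> x) z * M"
              using vp dM sucS by (meson mult_left_mono subsetD)
            show "\<exists>z\<in>?T. val x (\<pi> x) z * d z < val x (\<pi> x) z * M"
              using yT dy vp by (meson mult_strict_left_mono)
          qed
          also have "\<dots> = M" using vs by (simp add: sum_distrib_right[symmetric])
          finally show False using dle dx by simp
        qed
      qed
      obtain y where yT: "y \<in> ?T" using neT by blast
      then have "y \<in> X" using cl by blast
      then have "y \<noteq> fail" using dfail Mpos unfolding X_def by auto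
      then have "(St x, SA x (\<pi> x)) \<in> edges \<Delta> fail" using yT unfolding succs_def by auto
      then show ?thesis using cl by simp
    qed
    obtain P B where "end_component S \<Delta> fail P B" "P \<noteq> {}"
      using closed_EC[OF finX neX XS, where D=\<Delta> and fail=fail and \<pi>=\<pi>] props by blast
    then show False using no_EC[OF pm iso] by blast
  qed
  have "v s \<le> r s" using dM[OF sS] M0 unfolding d_def by simp
  also have "\<dots> \<le> max_rew N val fin s" unfolding r_def by (rule mr_props(1)[OF stN gpN stN])
  finally have partB: "max_rew \<Delta> val fin s \<le> max_rew N val fin s" unfolding v_def .
  show ?thesis using partA partB unfolding N_def by simp
qed

end
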